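(* For $n\ge1$, let $g(n)$ be the number of permutations of $[n]$ with all valleys even and all peaks odd that end with an ascent, and let $c(n)$, $d(n)$ be the numbers of permutations of $[n]$ in which every alternating run has length less than $3$ and the last alternating run has length $1$, respectively $2$. Then $g(n)=c(n)$ if $n$ is odd and $g(n)=d(n)$ if $n$ is even.
   Context: For $\pi=\pi_1\cdots\pi_n$: index $i\in\{2,\dots,n-1\}$ is a peak if $\pi_{i-1}<\pi_i>\pi_{i+1}$, a valley if $\pi_{i-1}>\pi_i<\pi_{i+1}$; $\pi$ ends with an ascent if $n\ge2$ and $\pi_{n-1}<\pi_n$. $i\in[n-1]$ is an alternating descent if $i$ odd and $\pi_i>\pi_{i+1}$, or $i$ even and $\pi_i<\pi_{i+1}$; an alternating run is a maximal block of consecutive entries containing no alternating descent; the last alternating run is the one containing $\pi_n$. *)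

theory Defs
  imports "HOL-Combinatorics.Multiset_Permutations"
begin

text \<open>A permutation of [n] is a list p with p \<in> permutations_of_set {1..n};
  the entry pi_i (1-indexed) is p ! (i - 1).\<close>

definition ent :: "nat list \<Rightarrow> nat \<Rightarrow> nat" where
  "ent p i = p ! (i - 1)"

definition is_peak :: "nat list \<Rightarrow> nat \<Rightarrow> bool" where
  "is_peak p i \<longleftrightarrow> 2 \<le> i \<and> i \<le> length p - 1 \<and>
     ent p (i - 1) < ent p i \<and> ent p i > ent p (i + 1)"

definition is_valley :: "nat list \<Rightarrow> nat \<Rightarrow> bool" where
  "is_valley p i \<longleftrightarrow> 2 \<le> i \<and> i \<le> length p - 1 \<and>
     ent p (i - 1) > ent p i \<and> ent p i < ent p (i + 1)"

definition ends_with_ascent :: "nat list \<Rightarrow> bool" where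
  "ends_with_ascent p \<longleftrightarrow> length p \<ge> 2 \<and> ent p (length p - 1) < ent p (length p)"

definition alt_descent :: "nat list \<Rightarrow> nat \<Rightarrow> bool" where
  "alt_descent p i \<longleftrightarrow> 1 \<le> i \<and> i \<le> length p - 1 \<and>
     ((odd i \<and> ent p i > ent p (i + 1)) \<or> (even i \<and> ent p i < ent p (i + 1)))"

definition alt_run :: "nat list \<Rightarrow> nat \<Rightarrow> nat \<Rightarrow> bool" where
  "alt_run p a b \<longleftrightarrow> 1 \<le> a \<and> a \<le> b \<and> b \<le> length p \<and>
     (\<forall>i. a \<le> i \<and> i < b \<longrightarrow> \<not> alt_descent p i) \<and>
     (a = 1 \<or> alt_descent p (a - 1)) \<and>
     (b = length p \<or> alt_descent p b)"

definition g_count :: "nat \<Rightarrow> nat" where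
  "g_count n = card {p \<in> permutations_of_set {1..n}.
     (\<forall>i. is_valley p i \<longrightarrow> even i) \<and> (\<forall>i. is_peak p i \<longrightarrow> odd i) \<and> ends_with_ascent p}"

definition runs_last :: "nat \<Rightarrow> nat \<Rightarrow> nat" where
  "runs_last k n = card {p \<in> permutations_of_set {1..n}.
     (\<forall>a b. alt_run p a b \<longrightarrow> b - a + 1 < 3) \<and>
     (\<exists>a. alt_run p a n \<and> n - a + 1 = k)}"

definition c_count :: "nat \<Rightarrow> nat" where "c_count n = runs_last 1 n"
definition d_count :: "nat \<Rightarrow> nat" where "d_count n = runs_last 2 n"

end

theory Submission
  imports Defs
begin

lemma ent_neq:
  assumes "distinct p" "1 \<le> i" "i < length p"
  shows "ent p i \<noteq> ent p (Suc i)"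
  using assms unfolding ent_def
  by (simp add: nth_eq_iff_index_eq)

lemma key:
  assumes d: "distinct p" and n: "length p = n" "n \<ge> 2"
  shows "((\<forall>i. is_valley p i \<longrightarrow> even i) \<and> (\<forall>i. is_peak p i \<longrightarrow> odd i) \<and> ends_with_ascent p)
    \<longleftrightarrow> ((\<forall>i. 1 \<le> i \<and> i + 1 \<le> n - 1 \<longrightarrow> alt_descent p i \<or> alt_descent p (i + 1))
         \<and> (if odd n then alt_descent p (n - 1) else \<not> alt_descent p (n - 1)))"
proof -
  have ne: "\<And>i. 1 \<le> i \<Longrightarrow> i < n \<Longrightarrow> ent p i \<noteq> ent p (Suc i)"
    using ent_neq[OF d] n by auto
  have E: "ends_with_ascent p \<longleftrightarrow> (if odd n then alt_descent p (n - 1) else \<not> alt_descent p (n - 1))"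
  proof -
    have ne1: "ent p (n - 1) \<noteq> ent p n" using ne[of "n - 1"] n by simp
    show ?thesis
      using n ne1 unfolding ends_with_ascent_def alt_descent_def
      by (cases "odd n") (auto simp: less_le)
  qed
  have loc: "(alt_descent p i \<or> alt_descent p (i + 1)) \<longleftrightarrow>
      ((is_valley p (i+1) \<longrightarrow> even (i+1)) \<and> (is_peak p (i+1) \<longrightarrow> odd (i+1)))"
    if i: "1 \<le> i" "i + 1 \<le> n - 1" for i
  proof -
    have a: "ent p i \<noteq> ent p (i+1)" "ent p (i+1) \<noteq> ent p (i+2)"
    proof -
      show "ent p i \<noteq> ent p (i+1)" using ne[of i] i by simp
      show "ent p (i+1) \<noteq> ent p (i+2)" using ne[of "i+1"] i by simp
    qed
    have vv: "is_valley p (i+1) \<longleftrightarrow> ent p i > ent p (i+1) \<and> ent p (i+1) < ent p (i+2)"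
      using i n unfolding is_valley_def by (auto simp: add.commute)
    have pp: "is_peak p (i+1) \<longleftrightarrow> ent p i < ent p (i+1) \<and> ent p (i+1) > ent p (i+2)"
      using i n unfolding is_peak_def by (auto simp: add.commute)
    have ad1: "alt_descent p i \<longleftrightarrow> (odd i \<and> ent p i > ent p (i+1)) \<or> (even i \<and> ent p i < ent p (i+1))"
      using i n unfolding alt_descent_def by auto
    have ad2: "alt_descent p (i+1) \<longleftrightarrow> (even i \<and> ent p (i+1) > ent p (i+2)) \<or> (odd i \<and> ent p (i+1) < ent p (i+2))"
      using i n unfolding alt_descent_def by (auto simp: add.commute)
    show ?thesis
      unfolding ad1 ad2 vv pp using a by (cases "odd i") auto
  qed
  have rng: "is_valley p k \<or> is_peak p k \<Longrightarrow> 1 \<le> k - 1 \<and> k - 1 + 1 \<le> n - 1 \<and> k = k - 1 + 1" for k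
    using n unfolding is_valley_def is_peak_def by auto
  have P: "((\<forall>i. is_valley p i \<longrightarrow> even i) \<and> (\<forall>i. is_peak p i \<longrightarrow> odd i))
    \<longleftrightarrow> (\<forall>i. 1 \<le> i \<and> i + 1 \<le> n - 1 \<longrightarrow> alt_descent p i \<or> alt_descent p (i + 1))"
  proof
    assume H: "(\<forall>i. is_valley p i \<longrightarrow> even i) \<and> (\<forall>i. is_peak p i \<longrightarrow> odd i)"
    show "\<forall>i. 1 \<le> i \<and> i + 1 \<le> n - 1 \<longrightarrow> alt_descent p i \<or> alt_descent p (i + 1)"
      using loc H by blast
  next
    assume H: "\<forall>i. 1 \<le> i \<and> i + 1 \<le> n - 1 \<longrightarrow> alt_descent p i \<or> alt_descent p (i + 1)"
    show "(\<forall>i. is_valley p i \<longrightarrow> even i) \<and> (\<forall>i. is_peak p i \<longrightarrow> odd i)"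
    proof (intro conjI allI impI)
      fix k assume k: "is_valley p k"
      then have r: "1 \<le> k - 1 \<and> k - 1 + 1 \<le> n - 1 \<and> k = k - 1 + 1" using rng by blast
      then have "(is_valley p (k-1+1) \<longrightarrow> even (k-1+1))" using loc[of "k-1"] H by blast
      then show "even k" using r k by metis
    next
      fix k assume k: "is_peak p k"
      then have r: "1 \<le> k - 1 \<and> k - 1 + 1 \<le> n - 1 \<and> k = k - 1 + 1" using rng by blast
      then have "(is_peak p (k-1+1) \<longrightarrow> odd (k-1+1))" using loc[of "k-1"] H by blast
      then show "odd k" using r k by metis
    qed
  qed
  show ?thesis using E P by blast
qed

lemma runsA:
  assumes n: "length p = n"
  shows "(\<forall>a b. alt_run p a b \<longrightarrow> b - a + 1 < 3) \<longleftrightarrow>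
         (\<forall>i. 1 \<le> i \<and> i + 1 \<le> n - 1 \<longrightarrow> alt_descent p i \<or> alt_descent p (i + 1))"
proof
  assume H: "\<forall>a b. alt_run p a b \<longrightarrow> b - a + 1 < 3"
  show "\<forall>i. 1 \<le> i \<and> i + 1 \<le> n - 1 \<longrightarrow> alt_descent p i \<or> alt_descent p (i + 1)"
  proof (rule ccontr)
    assume "\<not> ?thesis"
    then obtain i where i: "1 \<le> i" "i + 1 \<le> n - 1" and g: "\<not> alt_descent p i" "\<not> alt_descent p (i+1)"
      by blast
    define A where "A = {a'. 1 \<le> a' \<and> a' \<le> i \<and> (a' = 1 \<or> alt_descent p (a' - 1))}"
    define B where "B = {b'. i + 2 \<le> b' \<and> b' \<le> n \<and> (b' = n \<or> alt_descent p b')}"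
    have fA: "finite A" unfolding A_def by auto
    have fB: "finite B" unfolding B_def by auto
    have 1: "1 \<in> A" using i unfolding A_def by auto
    have nB: "n \<in> B" using i unfolding B_def by auto
    define a where "a = Max A"
    define b where "b = Min B"
    have aA: "a \<in> A" unfolding a_def using fA 1 by (intro Max_in) auto
    have bB: "b \<in> B" unfolding b_def using fB nB by (intro Min_in) auto
    have amax: "x \<in> A \<Longrightarrow> x \<le> a" for x unfolding a_def using fA by simp
    have bmin: "x \<in> B \<Longrightarrow> b \<le> x" for x unfolding b_def using fB by simp
    have run: "alt_run p a b"
      unfolding alt_run_def
    proof (intro conjI allI impI)
      show "1 \<le> a" "a \<le> b" "b \<le> length p" using aA bB n unfolding A_def B_def by auto
      show "a = 1 \<or> alt_descent p (a - 1)" using aA unfolding A_def by auto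
      show "b = length p \<or> alt_descent p b" using bB n unfolding B_def by auto
    next
      fix j assume j: "a \<le> j \<and> j < b"
      show "\<not> alt_descent p j"
      proof
        assume ad: "alt_descent p j"
        consider "j < i" | "j = i" | "j = i + 1" | "j \<ge> i + 2" by linarith
        then show False
        proof cases
          case 1
          then have "j + 1 \<in> A" using ad unfolding A_def by auto
          then show False using amax j by fastforce
        next
          case 2 then show False using g ad by simp
        next
          case 3 then show False using g ad by simp
        next
          case 4
          have "b \<le> n" using bB unfolding B_def by auto
          then have "j \<in> B" using 4 ad j unfolding B_def by auto
          then show False using bmin j by fastforce
        qed
      qed
    qed
    have "a \<le> i" "i + 2 \<le> b" using aA bB unfolding A_def B_def by auto
    then show False using H run by fastforce
  qed
next
  assume H: "\<forall>i. 1 \<le> i \<and> i + 1 \<le> n - 1 \<longrightarrow> alt_descent p i \<or> alt_descent p (i + 1)"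
  show "\<forall>a b. alt_run p a b \<longrightarrow> b - a + 1 < 3"
  proof (intro allI impI)
    fix a b assume r: "alt_run p a b"
    show "b - a + 1 < 3"
    proof (rule ccontr)
      assume "\<not> b - a + 1 < 3"
      then have "a + 2 \<le> b" by linarith
      moreover have "1 \<le> a" "b \<le> n" using r n unfolding alt_run_def by auto
      ultimately have "alt_descent p a \<or> alt_descent p (a + 1)" using H by auto
      moreover have "\<not> alt_descent p a" "\<not> alt_descent p (a + 1)"
        using r \<open>a + 2 \<le> b\<close> unfolding alt_run_def by auto
      ultimately show False by blast
    qed
  qed
qed

lemma last1:
  assumes n: "length p = n" "n \<ge> 2"
  shows "(\<exists>a. alt_run p a n \<and> n - a + 1 = 1) \<longleftrightarrow> alt_descent p (n - 1)"
proof
  assume "\<exists>a. alt_run p a n \<and> n - a + 1 = 1"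
  then obtain a where "alt_run p a n" "n - a + 1 = 1" by blast
  then have "a = n" "a = 1 \<or> alt_descent p (a - 1)" unfolding alt_run_def by auto
  then show "alt_descent p (n - 1)" using n by auto
next
  assume "alt_descent p (n - 1)"
  then have "alt_run p n n" using n unfolding alt_run_def by auto
  then show "\<exists>a. alt_run p a n \<and> n - a + 1 = 1" by auto
qed

lemma last2:
  assumes n: "length p = n" "n \<ge> 2"
    and H: "\<forall>i. 1 \<le> i \<and> i + 1 \<le> n - 1 \<longrightarrow> alt_descent p i \<or> alt_descent p (i + 1)"
  shows "(\<exists>a. alt_run p a n \<and> n - a + 1 = 2) \<longleftrightarrow> \<not> alt_descent p (n - 1)"
proof
  assume "\<exists>a. alt_run p a n \<and> n - a + 1 = 2"
  then obtain a where r: "alt_run p a n" "n - a + 1 = 2" by blast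
  then have "a = n - 1" unfolding alt_run_def by auto
  then show "\<not> alt_descent p (n - 1)" using r n unfolding alt_run_def by auto
next
  assume g: "\<not> alt_descent p (n - 1)"
  have "n - 1 = 1 \<or> alt_descent p (n - 1 - 1)"
  proof (cases "n = 2")
    case False
    then have "1 \<le> n - 2" "n - 2 + 1 \<le> n - 1" using n by auto
    then have "alt_descent p (n - 2) \<or> alt_descent p (n - 2 + 1)" using H by blast
    moreover have "n - 2 + 1 = n - 1" using n by auto
    ultimately show ?thesis using g by (simp add: numeral_2_eq_2)
  qed simp
  moreover have "\<forall>i. n - 1 \<le> i \<and> i < n \<longrightarrow> \<not> alt_descent p i"
  proof (intro allI impI)
    fix i assume "n - 1 \<le> i \<and> i < n"
    then have "i = n - 1" by linarith
    then show "\<not> alt_descent p i" using g by simp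
  qed
  ultimately have "alt_run p (n - 1) n" using n unfolding alt_run_def by auto
  moreover have "n - (n - 1) + 1 = 2" using n by auto
  ultimately show "\<exists>a. alt_run p a n \<and> n - a + 1 = 2" by blast
qed

theorem mainTheorem16:
  fixes n :: nat
  assumes "n \<ge> 2"
  shows "g_count n = (if odd n then c_count n else d_count n)"
proof -
  have eq: "((\<forall>i. is_valley p i \<longrightarrow> even i) \<and> (\<forall>i. is_peak p i \<longrightarrow> odd i) \<and> ends_with_ascent p)
     \<longleftrightarrow> ((\<forall>a b. alt_run p a b \<longrightarrow> b - a + 1 < 3) \<and>
          (\<exists>a. alt_run p a n \<and> n - a + 1 = (if odd n then 1 else 2)))"
    if p: "p \<in> permutations_of_set {1..n}" for p
  proof -
    have d: "distinct p" and l: "length p = n" using p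
      by (auto simp: permutations_of_set_def dest: distinct_card)
    show ?thesis
      unfolding key[OF d l assms] runsA[OF l]
      using last1[OF l assms] last2[OF l assms] by (cases "odd n") auto
  qed
  have "g_count n = runs_last (if odd n then 1 else 2) n"
    unfolding g_count_def runs_last_def
    by (rule arg_cong[where f=card], rule Collect_cong) (use eq in blast)
  then show ?thesis unfolding c_count_def d_count_def by simp
qed

end
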